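(* Let $(X,d)$ be a metric space admitting a weak conical bicombing and let $T$ be an isometry of $X$ (a surjective distance-preserving map) with $\inf_{x\in X}d(x,Tx)>0$. Then $T$ has infinite order; in fact $d(x,T^{n}x)\rightarrow\infty$ as $n\to\infty$ for every $x\in X$.
   Context: A weak conical bicombing on $X$ is a map $\sigma:X\times X\times[0,1]\to X$, $(x,y,t)\mapsto\sigma_{xy}(t)$, such that each $\sigma_{xy}$ is a constant speed geodesic from $x$ to $y$ (i.e. $\sigma_{xy}(0)=x$, $\sigma_{xy}(1)=y$, $d(\sigma_{xy}(s),\sigma_{xy}(t))=|s-t|\,d(x,y)$), and $d(\sigma_{xy}(t),\sigma_{xy'}(t))\le t\,d(y,y')$ for all $x,y,y'\in X$ and $t\in[0,1]$. *)

theory Defs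
  imports "HOL-Analysis.Analysis"
begin

definition weak_conical_bicombing :: "('a::metric_space \<Rightarrow> 'a \<Rightarrow> real \<Rightarrow> 'a) \<Rightarrow> bool" where
  "weak_conical_bicombing \<sigma> \<longleftrightarrow>
     (\<forall>x y. \<sigma> x y 0 = x \<and> \<sigma> x y 1 = y \<and>
        (\<forall>s\<in>{0..1}. \<forall>t\<in>{0..1}. dist (\<sigma> x y s) (\<sigma> x y t) = \<bar>s - t\<bar> * dist x y)) \<and>
     (\<forall>x y y'. \<forall>t\<in>{0..1}. dist (\<sigma> x y t) (\<sigma> x y' t) \<le> t * dist y y')"

definition isometry_of :: "('a::metric_space \<Rightarrow> 'a) \<Rightarrow> bool" where
  "isometry_of T \<longleftrightarrow> surj T \<and> (\<forall>x y. dist (T x) (T y) = dist x y)"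

end

theory Submission
  imports Defs
begin

lemma key:
  fixes \<sigma> :: "'a::metric_space \<Rightarrow> 'a \<Rightarrow> real \<Rightarrow> 'a" and T :: "'a \<Rightarrow> 'a"
  assumes wc: "weak_conical_bicombing \<sigma>" and iso: "isometry_of T"
    and dl: "\<And>z. \<delta> \<le> dist z (T z)" and N: "N \<ge> 1"
  shows "real N * \<delta> \<le> dist x ((T^^N) x)"
proof -
  have geo1: "dist u (\<sigma> u v t) = t * dist u v" if "t \<in> {0..1}" for u v t
  proof -
    have "\<forall>s\<in>{0..1}. \<forall>t\<in>{0..1}. dist (\<sigma> u v s) (\<sigma> u v t) = \<bar>s - t\<bar> * dist u v"
      using wc unfolding weak_conical_bicombing_def by blast
    then have "dist (\<sigma> u v 0) (\<sigma> u v t) = \<bar>0 - t\<bar> * dist u v"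
      using that by auto
    moreover have "\<sigma> u v 0 = u" using wc unfolding weak_conical_bicombing_def by auto
    ultimately show ?thesis using that by auto
  qed
  have geo2: "dist (\<sigma> u v t) v = (1 - t) * dist u v" if "t \<in> {0..1}" for u v t
  proof -
    have "\<forall>s\<in>{0..1}. \<forall>t\<in>{0..1}. dist (\<sigma> u v s) (\<sigma> u v t) = \<bar>s - t\<bar> * dist u v"
      using wc unfolding weak_conical_bicombing_def by blast
    then have "dist (\<sigma> u v t) (\<sigma> u v 1) = \<bar>t - 1\<bar> * dist u v"
      using that by auto
    moreover have "\<sigma> u v 1 = v" using wc unfolding weak_conical_bicombing_def by auto
    ultimately show ?thesis using that by auto
  qed
  have cone: "dist (\<sigma> u v t) (\<sigma> u w t) \<le> t * dist v w" if "t \<in> {0..1}" for u v w t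
    using wc that unfolding weak_conical_bicombing_def by auto
  have dT: "dist (T u) (T v) = dist u v" for u v using iso unfolding isometry_of_def by auto
  have sT: "surj T" using iso unfolding isometry_of_def by auto
  define Ti where "Ti = inv T"
  have TTi: "T (Ti y) = y" for y unfolding Ti_def using sT by (simp add: surj_f_inv_f)
  have dTn: "dist ((T^^n) u) ((T^^n) v) = dist u v" for n u v
    by (induction n) (auto simp: dT)
  have TnTin: "(T^^n) ((Ti^^n) y) = y" for n y
  proof (induction n)
    case 0 then show ?case by simp
  next
    case (Suc n)
    have e1: "(T^^Suc n) u = (T^^n) (T u)" for u by (simp add: funpow_Suc_right del: funpow.simps)
    have "(T^^Suc n) ((Ti^^Suc n) y) = (T^^n) (T (Ti ((Ti^^n) y)))"
      unfolding e1 by simp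
    then show ?case using Suc TTi by simp
  qed
  define a where "a m = dist x ((T^^m) x)" for m
  have a0: "a m \<ge> 0" for m unfolding a_def by simp
  have sub: "a (m + n) \<le> a m + a n" for m n
  proof -
    have "a (m + n) \<le> dist x ((T^^m) x) + dist ((T^^m) x) ((T^^m) ((T^^n) x))"
      unfolding a_def by (simp add: funpow_add dist_triangle)
    then show ?thesis unfolding a_def dTn .
  qed
  have lin: "a m \<le> real m * a 1" for m
  proof (induction m)
    case 0 then show ?case by (simp add: a_def)
  next
    case (Suc m)
    have "a (Suc m) \<le> a m + a 1" using sub[of m 1] by simp
    then show ?case using Suc by (simp add: algebra_simps)
  qed
  have qN: "a (q * N + r) \<le> real q * a N + a r" for q r
  proof (induction q)
    case 0 then show ?case by simp
  next
    case (Suc q)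
    have "a (Suc q * N + r) \<le> a N + a (q * N + r)" using sub[of N "q*N+r"]
      by (simp add: add.assoc)
    then show ?case using Suc by (simp add: algebra_simps)
  qed
  define \<alpha> where "\<alpha> = a N / real N"
  define C where "C = real N * a 1"
  have \<alpha>0: "\<alpha> \<ge> 0" unfolding \<alpha>_def using a0 by simp
  have C0: "C \<ge> 0" unfolding C_def using a0 by simp
  have bound: "a m \<le> \<alpha> * real m + C" for m
  proof -
    have m: "m = (m div N) * N + m mod N" by simp
    have "a m \<le> real (m div N) * a N + a (m mod N)" using qN[of "m div N" "m mod N"] m by simp
    also have "a (m mod N) \<le> C"
    proof -
      have "a (m mod N) \<le> real (m mod N) * a 1" by (rule lin)
      also have "\<dots> \<le> real N * a 1"
        using N a0[of 1] by (intro mult_right_mono) (auto simp: less_imp_le)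
      finally show ?thesis unfolding C_def .
    qed
    also have "real (m div N) * a N \<le> \<alpha> * real m"
    proof -
      have "real (m div N) * real N \<le> real m"
        by (metis of_nat_le_iff of_nat_mult div_times_less_eq_dividend)
      then have "real (m div N) \<le> real m / real N" using N by (simp add: field_simps)
      then have "real (m div N) * a N \<le> (real m / real N) * a N"
        using a0 by (intro mult_right_mono) auto
      then show ?thesis unfolding \<alpha>_def by (simp add: mult.commute)
    qed
    finally show ?thesis by simp
  qed
  define P where "P j = (if j \<ge> 0 then (T^^nat j) x else (Ti^^nat (-j)) x)" for j :: int
  have P0: "P 0 = x" unfolding P_def by simp
  have TP: "T (P (j - 1)) = P j" for j
  proof (cases "j \<ge> 1")
    case True
    then have "nat j = Suc (nat (j - 1))" by simp
    then show ?thesis using True unfolding P_def by simp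
  next
    case False
    then have "nat (-(j - 1)) = Suc (nat (-j))" by simp
    then show ?thesis using False unfolding P_def by (auto simp: TTi)
  qed
  have dP: "dist x (P j) \<le> \<alpha> * \<bar>j\<bar> + C" for j
  proof (cases "j \<ge> 0")
    case True
    then have "dist x (P j) = a (nat j)" unfolding P_def a_def by simp
    then show ?thesis using bound[of "nat j"] True by simp
  next
    case False
    have "dist x (P j) = dist ((T^^nat (-j)) x) ((T^^nat (-j)) (P j))" by (simp add: dTn)
    also have "\<dots> = dist ((T^^nat (-j)) x) x" using False unfolding P_def by (simp add: TnTin)
    also have "\<dots> = a (nat (-j))" unfolding a_def by (simp add: dist_commute)
    finally show ?thesis using bound[of "nat (-j)"] False by simp
  qed
  have main: "\<delta> \<le> \<alpha> + (1 - l) * C + l ^ k * a 1" if l0: "0 < l" and l1: "l < 1" for l k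
  proof -
    have lI: "l \<in> {0..1}" using l0 l1 by simp
    define K where "K = l * \<alpha> / (1 - l)"
    have K0: "K \<ge> 0" unfolding K_def using l0 l1 \<alpha>0 by simp
    have K1: "(1 - l) * K = l * \<alpha>" unfolding K_def using l1 by simp
    define G where "G j = \<alpha> * \<bar>j\<bar> + C + K" for j :: int
    define F where "F u = \<sigma> x (T u) l" for u
    define z where "z k = (F^^k) x" for k
    have z0: "z 0 = x" and zS: "z (Suc k) = \<sigma> x (T (z k)) l" for k
      unfolding z_def F_def by auto
    have c1: "dist (z k) (P j) \<le> G j" for k j
    proof (induction k arbitrary: j)
      case 0 then show ?case using dP[of j] K0 unfolding G_def z0 by simp
    next
      case (Suc k)
      have "dist (z (Suc k)) (P j) \<le> dist (\<sigma> x (T (z k)) l) (\<sigma> x (P j) l) + dist (\<sigma> x (P j) l) (P j)"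
        unfolding zS by (rule dist_triangle)
      also have "\<dots> \<le> l * dist (T (z k)) (P j) + (1 - l) * dist x (P j)"
        using cone[OF lI] geo2[OF lI] by (intro add_mono) auto
      also have "dist (T (z k)) (P j) = dist (z k) (P (j - 1))"
        using TP[of j] dT by metis
      finally have 1: "dist (z (Suc k)) (P j) \<le> l * dist (z k) (P (j - 1)) + (1 - l) * dist x (P j)" .
      have 2: "l * dist (z k) (P (j - 1)) \<le> l * G (j - 1)"
        using Suc[of "j - 1"] l0 by simp
      have 3: "(1 - l) * dist x (P j) \<le> (1 - l) * (\<alpha> * \<bar>j\<bar> + C)"
        using dP[of j] l1 by simp
      have "\<bar>j - 1\<bar> \<le> \<bar>j\<bar> + 1" by simp
      then have "\<alpha> * \<bar>j - 1\<bar> \<le> \<alpha> * (\<bar>j\<bar> + 1)" using \<alpha>0 by (intro mult_left_mono) auto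
      then have 4: "G (j - 1) \<le> G j + \<alpha>" unfolding G_def by (simp add: algebra_simps)
      have 5: "l * G (j - 1) \<le> l * (G j + \<alpha>)" using 4 l0 by simp
      have "l * (G j + \<alpha>) + (1 - l) * (\<alpha> * \<bar>j\<bar> + C) = G j - (1 - l) * K + l * \<alpha>"
        unfolding G_def by (simp add: algebra_simps)
      also have "\<dots> = G j" using K1 by simp
      finally show ?case using 1 2 3 5 by linarith
    qed
    have c2: "dist (z k) (z (Suc k)) \<le> l ^ k * a 1" for k
    proof (induction k)
      case 0
      have "dist x (\<sigma> x (T x) l) = l * dist x (T x)" using geo1[OF lI] .
      also have "\<dots> \<le> dist x (T x)" using l0 l1 by (intro mult_left_le_one_le) auto
      finally show ?case unfolding z0 zS a_def by simp
    next
      case (Suc k)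
      have "dist (z (Suc k)) (z (Suc (Suc k))) \<le> l * dist (T (z k)) (T (z (Suc k)))"
        unfolding zS[of k] zS[of "Suc k"] using cone[OF lI] by blast
      also have "\<dots> = l * dist (z k) (z (Suc k))" by (simp add: dT)
      also have "\<dots> \<le> l * (l ^ k * a 1)" using Suc l0 by simp
      finally show ?case by simp
    qed
    have "\<delta> \<le> dist (z (Suc k)) (T (z (Suc k)))" by (rule dl)
    also have "\<dots> \<le> dist (z (Suc k)) (T (z k)) + dist (T (z k)) (T (z (Suc k)))"
      by (rule dist_triangle)
    also have "dist (z (Suc k)) (T (z k)) = (1 - l) * dist x (T (z k))"
      unfolding zS by (rule geo2[OF lI])
    also have "dist x (T (z k)) = dist (z k) (P (-1))"
      using TP[of 0] P0 dT by (metis diff_0 dist_commute)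
    also have "dist (T (z k)) (T (z (Suc k))) = dist (z k) (z (Suc k))" by (rule dT)
    finally have "\<delta> \<le> (1 - l) * dist (z k) (P (-1)) + l ^ k * a 1" using c2[of k] by linarith
    moreover have "(1 - l) * dist (z k) (P (-1)) \<le> (1 - l) * G (-1)"
      using c1[of k "-1"] l1 by simp
    moreover have "(1 - l) * G (-1) = \<alpha> + (1 - l) * C"
      unfolding G_def using K1 by (simp add: algebra_simps)
    ultimately show ?thesis by linarith
  qed
  have "\<delta> \<le> \<alpha>"
  proof (rule field_le_epsilon)
    fix \<eta> :: real assume \<eta>: "0 < \<eta>"
    define e where "e = min \<eta> 1"
    have e0: "0 < e" and e1: "e \<le> 1" and e\<eta>: "e \<le> \<eta>" using \<eta> unfolding e_def by auto
    define l where "l = 1 - e / (2 * (C + 1))"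
    have l0: "0 < l" and l1: "l < 1"
      unfolding l_def using e0 e1 C0 by (auto simp: field_simps)
    have "(1 - l) * C = e * (C / (2 * (C + 1)))" unfolding l_def by simp
    also have "\<dots> \<le> e * (1/2)"
      using e0 C0 by (intro mult_left_mono) (auto simp: field_simps)
    finally have lc: "(1 - l) * C \<le> \<eta> / 2" using e\<eta> by simp
    obtain k where k: "l ^ k < \<eta> / (2 * (a 1 + 1))"
      using real_arch_pow_inv[OF _ l1, of "\<eta> / (2 * (a 1 + 1))"] \<eta> a0[of 1] by auto
    have "l ^ k * a 1 \<le> \<eta> / (2 * (a 1 + 1)) * a 1"
      using k a0[of 1] by (intro mult_right_mono) auto
    also have "\<dots> \<le> \<eta> / 2" using \<eta> a0[of 1] by (simp add: field_simps)
    finally show "\<delta> \<le> \<alpha> + \<eta>" using main[OF l0 l1, of k] lc by linarith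
  qed
  then have "real N * \<delta> \<le> real N * \<alpha>" using N by (intro mult_left_mono) auto
  also have "\<dots> = a N" unfolding \<alpha>_def using N by simp
  finally show ?thesis unfolding a_def .
qed

theorem corollary2:
  fixes \<sigma> :: "'a::metric_space \<Rightarrow> 'a \<Rightarrow> real \<Rightarrow> 'a" and T :: "'a \<Rightarrow> 'a"
  assumes "weak_conical_bicombing \<sigma>"
    and "isometry_of T"
    and "(INF x. dist x (T x)) > 0"
  shows "(\<forall>n::nat. n \<ge> 1 \<longrightarrow> T ^^ n \<noteq> id) \<and>
         (\<forall>x. filterlim (\<lambda>n. dist x ((T ^^ n) x)) at_top sequentially)"
proof -
  define \<delta> where "\<delta> = (INF x. dist x (T x))"
  have d0: "\<delta> > 0" using assms(3) unfolding \<delta>_def .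
  have dl: "\<delta> \<le> dist z (T z)" for z
    unfolding \<delta>_def by (rule cINF_lower) (auto intro: bdd_belowI[of _ 0])
  have K: "real n * \<delta> \<le> dist x ((T^^n) x)" if "n \<ge> 1" for n x
    using key[OF assms(1,2) dl that] .
  have A: "\<forall>n::nat. n \<ge> 1 \<longrightarrow> T ^^ n \<noteq> id"
  proof (intro allI impI notI)
    fix n :: nat assume n: "n \<ge> 1" and "T ^^ n = id"
    then have "real n * \<delta> \<le> 0" using K[OF n, of undefined] by simp
    moreover have "real n * \<delta> > 0" using n d0 by simp
    ultimately show False by simp
  qed
  have B: "filterlim (\<lambda>n. dist x ((T ^^ n) x)) at_top sequentially" for x
  proof (rule filterlim_at_top_mono)
    show "filterlim (\<lambda>n. real n * \<delta>) at_top sequentially"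
      using d0 by (intro filterlim_tendsto_pos_mult_at_top[OF tendsto_const d0 filterlim_real_sequentially, THEN filterlim_cong[THEN iffD1, rotated 3]]) (auto simp: mult.commute)
    show "\<forall>\<^sub>F n in sequentially. real n * \<delta> \<le> dist x ((T ^^ n) x)"
      using K by (intro eventually_sequentiallyI[of 1]) auto
  qed
  show ?thesis using A B by blast
qed

end
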